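(* Let $\lambda\neq0$, $u_0$ smooth and $1$-periodic with $M_0=\max u_0'>0$ attained at the points $\overline\alpha_i$ and $m_0=\min u_0'<0$ attained at the points $\underline\alpha_j$. Let $\eta_*=1/(\lambda M_0)$ if $\lambda>0$ and $\eta_*=1/(\lambda m_0)$ if $\lambda<0$. Then $1-\lambda\eta u_0'(\alpha)>0$ for all $\eta\in[0,\eta_* )$ and $\alpha\in[0,1]$, and for the solution $u$ of $u_{xt}+uu_{xx}-\lambda u_x^2=-(\lambda+1)\int_0^1u_x^2\,dx$, $u(x,0)=u_0$ (periodic), at every time $t$ with $\eta(t)\in[0,\eta_* )$ one has, for all $i,j$, $$M(t)=u_x(\gamma(\overline\alpha_i,t),t),\qquad m(t)=u_x(\gamma(\underline\alpha_j,t),t),$$ and $u_x(\gamma(\alpha_1,t),t)=u_x(\gamma(\alpha_2,t),t)$ if and only if $u_0'(\alpha_1)=u_0'(\alpha_2)$.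
   Context: $\gamma$ is the characteristic: $\dot\gamma=u(\gamma,t)$, $\gamma(\alpha,0)=\alpha$. $M(t)=\sup_\alpha u_x(\gamma(\alpha,t),t)$, $m(t)=\inf_\alpha u_x(\gamma(\alpha,t),t)$. $\eta(t)$ solves $\dot\eta=\left(\int_0^1(1-\lambda\eta u_0'(\alpha))^{-1/\lambda}d\alpha\right)^{-2\lambda}$, $\eta(0)=0$, and along characteristics $u_x(\gamma(\alpha,t),t)=\frac{1}{\lambda\eta\bar{\mathcal K}_0^{2\lambda}}\left(\frac1{\mathcal J}-\frac{\bar{\mathcal K}_1}{\bar{\mathcal K}_0}\right)$ with $\mathcal J(\alpha,t)=1-\lambda\eta(t)u_0'(\alpha)$, $\bar{\mathcal K}_i(t)=\int_0^1\mathcal J^{-i-1/\lambda}d\alpha$. *)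

theory Defs
  imports "HOL-Analysis.Analysis"
begin

definition smooth_fun :: "(real \<Rightarrow> real) \<Rightarrow> bool" where
  "smooth_fun f \<longleftrightarrow> (\<forall>n x. ((deriv ^^ n) f) differentiable (at x))"

text \<open>J(alpha,t) = 1 - lambda eta(t) u0'(alpha), given eta = e.\<close>
definition Jfun :: "real \<Rightarrow> (real \<Rightarrow> real) \<Rightarrow> real \<Rightarrow> real \<Rightarrow> real" where
  "Jfun lam u0 e \<alpha> = 1 - lam * e * deriv u0 \<alpha>"

definition Kbar :: "real \<Rightarrow> (real \<Rightarrow> real) \<Rightarrow> real \<Rightarrow> real \<Rightarrow> real" where
  "Kbar lam u0 i e = integral {0..1} (\<lambda>\<alpha>. Jfun lam u0 e \<alpha> powr (- i - 1 / lam))"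

end

theory Submission
  imports Defs
begin



lemma aux_mono:
  fixes f d :: "real \<Rightarrow> real"
  assumes inc: "\<And>a b. d a < d b \<Longrightarrow> f a < f b"
    and eqv: "\<And>a b. d a = d b \<Longrightarrow> f a = f b"
    and le: "\<And>a. d a \<le> M" and ge: "\<And>a. m \<le> d a"
  shows "(\<forall>ai. d ai = M \<longrightarrow> f ai = (SUP a. f a)) \<and> (\<forall>aj. d aj = m \<longrightarrow> f aj = (INF a. f a))
     \<and> (\<forall>a1 a2. f a1 = f a2 \<longleftrightarrow> d a1 = d a2)"
proof (intro conjI allI impI)
  fix ai assume h: "d ai = M"
  have "\<And>a. f a \<le> f ai"
    by (metis eqv h inc le less_eq_real_def)
  then show "f ai = (SUP a. f a)"
    by (intro cSup_eq_maximum[symmetric]) auto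
next
  fix aj assume h: "d aj = m"
  have "\<And>a. f aj \<le> f a"
    by (metis eqv h inc ge less_eq_real_def)
  then show "f aj = (INF a. f a)"
    by (intro cInf_eq_minimum[symmetric]) auto
next
  fix a1 a2
  show "f a1 = f a2 \<longleftrightarrow> d a1 = d a2"
    by (metis eqv inc less_irrefl linorder_neqE_linordered_idom)
qed

lemma per_bdd:
  fixes g :: "real \<Rightarrow> real"
  assumes c: "continuous_on UNIV g" and p: "\<And>x. g (x + 1) = g x"
  shows "bdd_above (range g) \<and> bdd_below (range g)"
proof -
  have pn: "g (y + real n) = g y" for y n
  proof (induction n)
    case (Suc n)
    have "g (y + real (Suc n)) = g ((y + real n) + 1)" by (simp add: algebra_simps)
    then show ?case using p Suc by simp
  qed simp
  have sub: "range g \<subseteq> g ` {0..1}"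
  proof
    fix z assume "z \<in> range g"
    then obtain x where x: "z = g x" by auto
    have "g x = g (x - of_int (floor x))"
    proof (cases "floor x \<ge> 0")
      case True
      have "g (x - of_int (floor x)) = g ((x - of_int (floor x)) + real (nat (floor x)))"
        by (rule pn[symmetric])
      also have "\<dots> = g x" using True by simp
      finally show ?thesis by simp
    next
      case False
      have "g (x + real (nat (- floor x))) = g x" by (rule pn)
      moreover have "x + real (nat (- floor x)) = x - of_int (floor x)" using False by simp
      ultimately show ?thesis by simp
    qed
    moreover have "x - of_int (floor x) \<in> {0..1}"
      by (simp add: less_imp_le[OF frac_lt_1[unfolded frac_def]])
    ultimately show "z \<in> g ` {0..1}" using x by blast
  qed
  have "compact (g ` {0..1})"
    by (rule compact_continuous_image) (auto intro: continuous_on_subset[OF c])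
  then have "bounded (g ` {0..1})" by (rule compact_imp_bounded)
  then have "bdd_above (g ` {0..1}) \<and> bdd_below (g ` {0..1})"
    by (simp add: bounded_imp_bdd_above bounded_imp_bdd_below)
  then show ?thesis using sub by (meson bdd_above_mono bdd_below_mono)
qed


theorem mainTheorem8:
  fixes lam T :: real
    and u0 :: "real \<Rightarrow> real"
    and u ux uxx uxt :: "real \<Rightarrow> real \<Rightarrow> real"
    and \<gamma> :: "real \<Rightarrow> real \<Rightarrow> real"
    and \<eta> :: "real \<Rightarrow> real"
  defines "M0 \<equiv> (SUP \<alpha>. deriv u0 \<alpha>)"
    and "m0 \<equiv> (INF \<alpha>. deriv u0 \<alpha>)"
    and "\<eta>s \<equiv> (if lam > 0 then 1 / (lam * (SUP \<alpha>. deriv u0 \<alpha>)) else 1 / (lam * (INF \<alpha>. deriv u0 \<alpha>)))"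
  assumes lam: "lam \<noteq> 0"
    and u0_smooth: "smooth_fun u0"
    and u0_per: "\<And>x. u0 (x + 1) = u0 x"
    and M0_pos: "M0 > 0"
    and m0_neg: "m0 < 0"
    and T_pos: "T > 0"
    \<comment> \<open>u is a classical periodic solution of the PDE on [0,T)\<close>
    and u_per: "\<And>x t. 0 \<le> t \<Longrightarrow> t < T \<Longrightarrow> u (x + 1) t = u x t"
    and u_init: "\<And>x. u x 0 = u0 x"
    and u_x: "\<And>x t. 0 \<le> t \<Longrightarrow> t < T \<Longrightarrow> ((\<lambda>y. u y t) has_real_derivative ux x t) (at x)"
    and u_xx: "\<And>x t. 0 \<le> t \<Longrightarrow> t < T \<Longrightarrow> ((\<lambda>y. ux y t) has_real_derivative uxx x t) (at x)"
    and u_xt: "\<And>x t. 0 \<le> t \<Longrightarrow> t < T \<Longrightarrow>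
                 ((\<lambda>s. ux x s) has_real_derivative uxt x t) (at t within {0..<T})"
    and u_t: "\<And>x t. 0 \<le> t \<Longrightarrow> t < T \<Longrightarrow> (\<lambda>s. u x s) differentiable (at t within {0..<T})"
    and u_cont: "continuous_on (UNIV \<times> {0..<T}) (\<lambda>(x, t). u x t)"
    and ux_cont: "continuous_on (UNIV \<times> {0..<T}) (\<lambda>(x, t). ux x t)"
    and pde: "\<And>x t. 0 \<le> t \<Longrightarrow> t < T \<Longrightarrow>
                uxt x t + u x t * uxx x t - lam * (ux x t)\<^sup>2
                  = - (lam + 1) * integral {0..1} (\<lambda>y. (ux y t)\<^sup>2)"
    \<comment> \<open>characteristics\<close>
    and \<gamma>_init: "\<And>\<alpha>. \<gamma> \<alpha> 0 = \<alpha>"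
    and \<gamma>_ode: "\<And>\<alpha> t. 0 \<le> t \<Longrightarrow> t < T \<Longrightarrow>
                ((\<gamma> \<alpha>) has_real_derivative u (\<gamma> \<alpha> t) t) (at t within {0..<T})"
    \<comment> \<open>the auxiliary function eta\<close>
    and \<eta>_init: "\<eta> 0 = 0"
    and \<eta>_ode: "\<And>t. 0 \<le> t \<Longrightarrow> t < T \<Longrightarrow>
                (\<eta> has_real_derivative
                   (integral {0..1} (\<lambda>\<alpha>. (1 - lam * \<eta> t * deriv u0 \<alpha>) powr (- 1 / lam)))
                     powr (- 2 * lam)) (at t within {0..<T})"
    \<comment> \<open>solution formula along characteristics (from the context)\<close>
    and rep: "\<And>\<alpha> t. 0 \<le> t \<Longrightarrow> t < T \<Longrightarrow> 0 < \<eta> t \<Longrightarrow> \<eta> t < \<eta>s \<Longrightarrow>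
                ux (\<gamma> \<alpha> t) t
                  = 1 / (lam * \<eta> t * Kbar lam u0 0 (\<eta> t) powr (2 * lam))
                    * (1 / Jfun lam u0 (\<eta> t) \<alpha> - Kbar lam u0 1 (\<eta> t) / Kbar lam u0 0 (\<eta> t))"
  shows "(\<forall>e \<in> {0..<\<eta>s}. \<forall>\<alpha> \<in> {0..1}. 1 - lam * e * deriv u0 \<alpha> > 0)
       \<and> (\<forall>t. 0 \<le> t \<and> t < T \<and> \<eta> t \<in> {0..<\<eta>s} \<longrightarrow>
            (\<forall>\<alpha>i. deriv u0 \<alpha>i = M0 \<longrightarrow> ux (\<gamma> \<alpha>i t) t = (SUP \<alpha>. ux (\<gamma> \<alpha> t) t))
          \<and> (\<forall>\<alpha>j. deriv u0 \<alpha>j = m0 \<longrightarrow> ux (\<gamma> \<alpha>j t) t = (INF \<alpha>. ux (\<gamma> \<alpha> t) t))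
          \<and> (\<forall>\<alpha>1 \<alpha>2. ux (\<gamma> \<alpha>1 t) t = ux (\<gamma> \<alpha>2 t) t \<longleftrightarrow> deriv u0 \<alpha>1 = deriv u0 \<alpha>2))"
  proof -
  define d where "d = deriv u0"
  have hdiff: "u0 differentiable at x" for x
    using u0_smooth unfolding smooth_fun_def by (metis funpow_0)
  have hddiff: "deriv u0 differentiable at x" for x
    using u0_smooth unfolding smooth_fun_def by (metis funpow_0 funpow_Suc_right o_apply)
  have dcont: "continuous_on UNIV d"
    unfolding d_def by (intro continuous_at_imp_continuous_on ballI differentiable_imp_continuous_within hddiff)
  have dper: "d (x + 1) = d x" for x
  proof -
    have "(u0 has_real_derivative deriv u0 (x+1)) (at (x+1))"
      using hdiff DERIV_deriv_iff_real_differentiable by blast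
    then have "((\<lambda>y. u0 (y+1)) has_real_derivative deriv u0 (x+1)) (at x)"
      using DERIV_shift[of u0 "deriv u0 (x+1)" x 1] by simp
    then have "(u0 has_real_derivative deriv u0 (x+1)) (at x)"
      using u0_per by simp
    then show ?thesis unfolding d_def by (simp add: DERIV_imp_deriv)
  qed
  have bdd: "bdd_above (range d)" "bdd_below (range d)"
    using per_bdd[OF dcont dper] by auto
  have M0d: "M0 = Sup (range d)" and m0d: "m0 = Inf (range d)"
    by (simp_all add: M0_def m0_def d_def)
  have dle: "d a \<le> M0" for a unfolding M0d using bdd(1) by (simp add: cSup_upper)
  have dge: "m0 \<le> d a" for a unfolding m0d using bdd(2) by (simp add: cInf_lower)
  have etas: "\<eta>s = (if lam > 0 then 1/(lam*M0) else 1/(lam*m0))"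
    by (simp add: \<eta>s_def M0_def m0_def)
  have Jpos: "0 < 1 - lam*e*d a" if e0: "0 \<le> e" and e1: "e < \<eta>s" for e a
  proof (cases "lam > 0")
    case True
    have pos: "0 < lam*M0" using True M0_pos by simp
    have "e < 1/(lam*M0)" using e1 True etas by simp
    then have "e*(lam*M0) < 1" using pos by (simp add: less_divide_eq)
    moreover have "lam*e*d a \<le> lam*e*M0"
      by (rule mult_left_mono[OF dle]) (use True e0 in simp)
    ultimately show ?thesis by (simp add: algebra_simps)
  next
    case False
    then have l: "lam < 0" using lam by simp
    have pos: "0 < lam*m0" using l m0_neg by (simp add: mult_neg_neg)
    have "e < 1/(lam*m0)" using e1 False etas by simp
    then have "e*(lam*m0) < 1" using pos by (simp add: less_divide_eq)
    moreover have "lam*e*d a \<le> lam*e*m0"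
      by (rule mult_left_mono_neg[OF dge]) (use l e0 in \<open>simp add: mult_nonneg_nonpos2\<close>)
    ultimately show ?thesis by (simp add: algebra_simps)
  qed
  have etacont: "continuous_on {0..<T} \<eta>"
    unfolding continuous_on_eq_continuous_within
    using \<eta>_ode by (metis DERIV_continuous atLeastLessThan_iff)
  have etamono: "\<eta> a \<le> \<eta> b" if "0 \<le> a" "a \<le> b" "b < T" for a b
  proof (rule DERIV_nonneg_imp_increasing_open[OF \<open>a \<le> b\<close>])
    fix x assume x: "a < x" "x < b"
    have "at x within {0..<T} = at x"
      by (rule at_within_open_subset[of x "{0<..<T}"]) (use x that in auto)
    then show "\<exists>y. DERIV \<eta> x :> y \<and> 0 \<le> y"
      using \<eta>_ode[of x] x that by auto
  next
    show "continuous_on {a..b} \<eta>"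
      by (rule continuous_on_subset[OF etacont]) (use that in auto)
  qed
  have etapos: "0 < \<eta> t" if t: "0 < t" "t < T" for t
  proof (rule ccontr)
    assume "\<not> 0 < \<eta> t"
    then have z: "\<eta> s = 0" if "0 \<le> s" "s \<le> t" for s
      using etamono[of 0 s] etamono[of s t] that t \<eta>_init by force
    define s where "s = t/2"
    have s: "0 < s" "s < t" using t by (auto simp: s_def)
    have "at s within {0..<T} = at s"
      by (rule at_within_open_subset[of s "{0<..<T}"]) (use s t in auto)
    then have d1: "(\<eta> has_real_derivative 1) (at s)"
      using \<eta>_ode[of s] s t z[of s] by simp
    have "((\<lambda>_. 0::real) has_real_derivative 0) (at s)" by simp
    then have d0: "(\<eta> has_real_derivative 0) (at s)"
      by (rule has_field_derivative_transform_within_open[of _ _ _ "{0<..<t}"])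
         (use s z in auto)
    show False using DERIV_unique[OF d1 d0] by simp
  qed
  have ux0: "ux a 0 = d a" for a
  proof -
    have "((\<lambda>y. u y 0) has_real_derivative ux a 0) (at a)" using u_x T_pos by simp
    then have "(u0 has_real_derivative ux a 0) (at a)" using u_init by simp
    then show ?thesis unfolding d_def by (simp add: DERIV_imp_deriv)
  qed
  have part1: "\<forall>e \<in> {0..<\<eta>s}. \<forall>\<alpha> \<in> {0..1}. 1 - lam * e * deriv u0 \<alpha> > 0"
    using Jpos unfolding d_def by auto
  have part2: "(\<forall>\<alpha>i. d \<alpha>i = M0 \<longrightarrow> ux (\<gamma> \<alpha>i t) t = (SUP \<alpha>. ux (\<gamma> \<alpha> t) t))
          \<and> (\<forall>\<alpha>j. d \<alpha>j = m0 \<longrightarrow> ux (\<gamma> \<alpha>j t) t = (INF \<alpha>. ux (\<gamma> \<alpha> t) t))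
          \<and> (\<forall>\<alpha>1 \<alpha>2. ux (\<gamma> \<alpha>1 t) t = ux (\<gamma> \<alpha>2 t) t \<longleftrightarrow> d \<alpha>1 = d \<alpha>2)"
    if t: "0 \<le> t" "t < T" "\<eta> t \<in> {0..<\<eta>s}" for t
  proof (cases "t = 0")
    case True
    show ?thesis
      by (rule aux_mono[OF _ _ dle dge]) (use True \<gamma>_init ux0 in auto)
  next
    case False
    define e where "e = \<eta> t"
    have e: "0 < e" "e < \<eta>s" using etapos[of t] t False by (auto simp: e_def)
    define J where "J a = 1 - lam*e*d a" for a
    have Jp: "0 < J a" for a unfolding J_def using Jpos e by simp
    have Jf: "Jfun lam u0 e a = J a" for a by (simp add: Jfun_def J_def d_def)
    define h where "h a = J a powr (- 0 - 1/lam)" for a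
    have Jc: "continuous_on {0..1} J"
      unfolding J_def by (intro continuous_intros continuous_on_subset[OF dcont]) auto
    have hc: "continuous_on {0..1} h"
      unfolding h_def by (rule continuous_on_powr'[OF Jc]) (use Jp less_imp_le in \<open>auto intro: continuous_intros\<close>, metis less_irrefl Jp)
    obtain a0 where a0: "a0 \<in> {0..1}" "\<And>y. y \<in> {0..1} \<Longrightarrow> h a0 \<le> h y"
      using continuous_attains_inf[OF compact_Icc _ hc] by auto
    have hpos: "0 < h a0" unfolding h_def using Jp[of a0] by simp
    have "h a0 \<le> integral {0..1} h"
      using integral_le[of "\<lambda>_. h a0" "{0..1}" h] a0 integrable_continuous_interval[OF hc] by auto
    then have K0: "0 < Kbar lam u0 0 e"
    proof -
      have "Kbar lam u0 0 e = integral {0..1} h"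
        unfolding Kbar_def h_def[abs_def] Jf by simp
      then show ?thesis using hpos \<open>h a0 \<le> integral {0..1} h\<close> by linarith
    qed
    define C where "C = 1 / (lam * e * Kbar lam u0 0 e powr (2 * lam))"
    define K where "K = Kbar lam u0 1 e / Kbar lam u0 0 e"
    have P: "0 < Kbar lam u0 0 e powr (2 * lam)" using K0 by simp
    have f: "ux (\<gamma> a t) t = C * (1 / J a - K)" for a
      using rep[of t a] t e by (simp add: e_def[symmetric] C_def K_def Jf)
    show ?thesis
    proof (rule aux_mono[OF _ _ dle dge])
      fix a b assume ab: "d a < d b"
      show "ux (\<gamma> a t) t < ux (\<gamma> b t) t"
      proof (cases "lam > 0")
        case True
        have Cp: "0 < C" unfolding C_def using True e P by simp
        have "J b < J a" unfolding J_def using True e ab by (simp add: mult_strict_left_mono)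
        then have "1 / J a < 1 / J b"
          by (rule divide_strict_left_mono) (use Jp in simp_all)
        then show ?thesis unfolding f using Cp by (simp add: mult_strict_left_mono)
      next
        case False
        then have l: "lam < 0" using lam by simp
        have Cn: "C < 0" unfolding C_def using l e P
          by (simp add: mult_neg_pos mult_pos_pos)
        have "lam*e < 0" using l e by (simp add: mult_neg_pos)
        then have "J a < J b" unfolding J_def using ab by (simp add: mult_strict_left_mono_neg)
        then have "1 / J b < 1 / J a"
          by (rule divide_strict_left_mono) (use Jp in simp_all)
        then show ?thesis unfolding f using Cn by (simp add: mult_strict_left_mono_neg)
      qed
    next
      fix a b assume "d a = d b"
      then show "ux (\<gamma> a t) t = ux (\<gamma> b t) t" unfolding f J_def by simp
    qed
  qed
  show ?thesis using part1 part2 unfolding d_def by blast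
qed

end
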